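(* Let $\rho$ be the standard representation of $\mathfrak{sl}_2(\mathbb R)$ on $V=\mathbb R^2$, with $\mathfrak{sl}_2$ metrized by $B(x,y)=\mathrm{tr}(xy)$, whose Casimir tensor is $C=\tfrac12 H\otimes H+E\otimes F+F\otimes E$, where $H=\begin{pmatrix}1&0\\0&-1\end{pmatrix}$, $E=\begin{pmatrix}0&1\\0&0\end{pmatrix}$, $F=\begin{pmatrix}0&0\\1&0\end{pmatrix}$. Then the weight tensor $(\rho\otimes\rho)(C)\in\mathrm{End}(V)\otimes\mathrm{End}(V)$ cannot be realized on a symmetric space: there is no locally symmetric space $(M,g)$, point $p\in M$ and linear isomorphism $\phi:V\to T_pM$ whose induced isomorphism $\mathrm{End}(V)\otimes\mathrm{End}(V)\to\mathrm{End}(T_pM)\otimes\mathrm{End}(T_pM)$ maps $(\rho\otimes\rho)(C)$ to $\hat R_p$.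
   Context: A locally symmetric space is a connected pseudo-Riemannian manifold $(M,g)$ whose Levi-Civita connection has parallel curvature $\nabla R=0$, with $R(X,Y)Z=\nabla_X\nabla_YZ-\nabla_Y\nabla_XZ-\nabla_{[X,Y]}Z$. In a frame, $R(e_a,e_b)e_c=R^d_{abc}e_d$, $g^{ab}$ is the inverse metric, repeated indices summed, and $\hat R_p=\sum\hat R^{bd}_{ac}(e_b\otimes e^a)\otimes(e_d\otimes e^c)\in\mathrm{End}(T_pM)\otimes\mathrm{End}(T_pM)$ with $\hat R^{bd}_{ac}=g^{bx}R^d_{axc}$. *)

theory Defs
  imports "HOL-Analysis.Analysis"
begin

text \<open>Local-coordinate model of a 2-dimensional pseudo-Riemannian manifold:
  a nonempty connected open set U of R^2 (a chart domain) with a smooth,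
  symmetric, nondegenerate metric g.\<close>

definition pd :: "2 \<Rightarrow> (real^2 \<Rightarrow> real) \<Rightarrow> real^2 \<Rightarrow> real" where
  "pd i f x = deriv (\<lambda>t. f (x + t *\<^sub>R axis i 1)) 0"

fun Ck :: "nat \<Rightarrow> (real^2) set \<Rightarrow> (real^2 \<Rightarrow> real) \<Rightarrow> bool" where
  "Ck 0 U f = continuous_on U f"
| "Ck (Suc k) U f = (continuous_on U f \<and> (\<forall>x\<in>U. f differentiable (at x))
                      \<and> (\<forall>i. Ck k U (pd i f)))"

definition smooth_on :: "(real^2) set \<Rightarrow> (real^2 \<Rightarrow> real) \<Rightarrow> bool" where
  "smooth_on U f = (\<forall>k. Ck k U f)"

definition christoffel :: "(real^2 \<Rightarrow> real^2^2) \<Rightarrow> 2 \<Rightarrow> 2 \<Rightarrow> 2 \<Rightarrow> real^2 \<Rightarrow> real" where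
  "christoffel g k i j x = (1/2) * (\<Sum>l\<in>UNIV. matrix_inv (g x) $ k $ l *
      (pd i (\<lambda>y. g y $ j $ l) x + pd j (\<lambda>y. g y $ i $ l) x - pd l (\<lambda>y. g y $ i $ j) x))"

text \<open>R^d_abc with R(e_a,e_b)e_c = R^d_abc e_d,
  R(X,Y)Z = nabla_X nabla_Y Z - nabla_Y nabla_X Z - nabla_[X,Y] Z.\<close>
definition curv :: "(real^2 \<Rightarrow> real^2^2) \<Rightarrow> 2 \<Rightarrow> 2 \<Rightarrow> 2 \<Rightarrow> 2 \<Rightarrow> real^2 \<Rightarrow> real" where
  "curv g d a b c x =
     pd a (christoffel g d b c) x - pd b (christoffel g d a c) x
     + (\<Sum>e\<in>UNIV. christoffel g e b c x * christoffel g d a e x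
                 - christoffel g e a c x * christoffel g d b e x)"

definition nabla_curv :: "(real^2 \<Rightarrow> real^2^2) \<Rightarrow> 2 \<Rightarrow> 2 \<Rightarrow> 2 \<Rightarrow> 2 \<Rightarrow> 2 \<Rightarrow> real^2 \<Rightarrow> real" where
  "nabla_curv g f d a b c x =
     pd f (curv g d a b c) x
     + (\<Sum>e\<in>UNIV. christoffel g d f e x * curv g e a b c x
                 - christoffel g e f a x * curv g d e b c x
                 - christoffel g e f b x * curv g d a e c x
                 - christoffel g e f c x * curv g d a b e x)"

definition locally_symmetric_chart :: "(real^2) set \<Rightarrow> (real^2 \<Rightarrow> real^2^2) \<Rightarrow> bool" where
  "locally_symmetric_chart U g \<longleftrightarrow>
     open U \<and> connected U \<and> U \<noteq> {} \<and>
     (\<forall>i j. smooth_on U (\<lambda>x. g x $ i $ j)) \<and>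
     (\<forall>x\<in>U. transpose (g x) = g x \<and> det (g x) \<noteq> 0) \<and>
     (\<forall>x\<in>U. \<forall>f d a b c. nabla_curv g f d a b c x = 0)"

text \<open>hat R^{bd}_{ac} = g^{bx} R^d_{axc}; \<open>Rhat g b a d c x\<close> is the coefficient of
  (e_b \<otimes> e^a) \<otimes> (e_d \<otimes> e^c).\<close>
definition Rhat :: "(real^2 \<Rightarrow> real^2^2) \<Rightarrow> 2 \<Rightarrow> 2 \<Rightarrow> 2 \<Rightarrow> 2 \<Rightarrow> real^2 \<Rightarrow> real" where
  "Rhat g b a d c x = (\<Sum>y\<in>UNIV. matrix_inv (g x) $ b $ y * curv g d a y c x)"

definition matH :: "real^2^2" where
  "matH = (\<chi> i j. if i = j then (if i = 1 then 1 else -1) else 0)"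
definition matE :: "real^2^2" where
  "matE = (\<chi> i j. if i = 1 \<and> j = 2 then 1 else 0)"
definition matF :: "real^2^2" where
  "matF = (\<chi> i j. if i = 2 \<and> j = 1 then 1 else 0)"

text \<open>Components of (rho \<otimes> rho)(C) = 1/2 H\<otimes>H + E\<otimes>F + F\<otimes>E in End(V)\<otimes>End(V):
  coefficient of (e_b \<otimes> e^a) \<otimes> (e_d \<otimes> e^c).\<close>
definition casimir_weight :: "2 \<Rightarrow> 2 \<Rightarrow> 2 \<Rightarrow> 2 \<Rightarrow> real" where
  "casimir_weight b a d c =
     (1/2) * matH $ b $ a * matH $ d $ c + matE $ b $ a * matF $ d $ c + matF $ b $ a * matE $ d $ c"

text \<open>Isomorphism End(V)\<otimes>End(V) \<rightarrow> End(W)\<otimes>End(W) induced by an isomorphism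
  phi: V \<rightarrow> W with matrix P (A \<otimes> B \<mapsto> P A P^-1 \<otimes> P B P^-1), in components.\<close>
definition transport :: "real^2^2 \<Rightarrow> (2 \<Rightarrow> 2 \<Rightarrow> 2 \<Rightarrow> 2 \<Rightarrow> real) \<Rightarrow> 2 \<Rightarrow> 2 \<Rightarrow> 2 \<Rightarrow> 2 \<Rightarrow> real" where
  "transport P T b a d c =
     (\<Sum>b'\<in>UNIV. \<Sum>a'\<in>UNIV. \<Sum>d'\<in>UNIV. \<Sum>c'\<in>UNIV.
        P $ b $ b' * matrix_inv P $ a' $ a * P $ d $ d' * matrix_inv P $ c' $ c * T b' a' d' c')"

end

theory Submission
  imports Defs
begin

definition L1 :: "real^2^2 \<Rightarrow> (2\<Rightarrow>2\<Rightarrow>2\<Rightarrow>2\<Rightarrow>real) \<Rightarrow> 2\<Rightarrow>2\<Rightarrow>2\<Rightarrow>2\<Rightarrow>real" where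
  "L1 M T = (\<lambda>b a d c. \<Sum>x\<in>UNIV. M$b$x * T x a d c)"
definition L2 :: "real^2^2 \<Rightarrow> (2\<Rightarrow>2\<Rightarrow>2\<Rightarrow>2\<Rightarrow>real) \<Rightarrow> 2\<Rightarrow>2\<Rightarrow>2\<Rightarrow>2\<Rightarrow>real" where
  "L2 M T = (\<lambda>b a d c. \<Sum>x\<in>UNIV. T b x d c * M$x$a)"
definition L3 :: "real^2^2 \<Rightarrow> (2\<Rightarrow>2\<Rightarrow>2\<Rightarrow>2\<Rightarrow>real) \<Rightarrow> 2\<Rightarrow>2\<Rightarrow>2\<Rightarrow>2\<Rightarrow>real" where
  "L3 M T = (\<lambda>b a d c. \<Sum>x\<in>UNIV. M$d$x * T b a x c)"
definition L4 :: "real^2^2 \<Rightarrow> (2\<Rightarrow>2\<Rightarrow>2\<Rightarrow>2\<Rightarrow>real) \<Rightarrow> 2\<Rightarrow>2\<Rightarrow>2\<Rightarrow>2\<Rightarrow>real" where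
  "L4 M T = (\<lambda>b a d c. \<Sum>x\<in>UNIV. T b a d x * M$x$c)"

definition rk1 :: "(2\<Rightarrow>2\<Rightarrow>2\<Rightarrow>2\<Rightarrow>real) \<Rightarrow> bool" where
  "rk1 T = (\<exists>X Y. \<forall>b a d c. T b a d c = X b a * Y d c)"

lemma transport_L: "transport P T = L1 P (L2 (matrix_inv P) (L3 P (L4 (matrix_inv P) T)))"
  unfolding transport_def L1_def L2_def L3_def L4_def
  by (intro ext) (simp add: sum_2 algebra_simps)

lemma L1_comp: "L1 M (L1 N T) = L1 (M ** N) T"
  unfolding L1_def matrix_matrix_mult_def by (intro ext) (simp add: sum_2 algebra_simps)
lemma L2_comp: "L2 M (L2 N T) = L2 (N ** M) T"
  unfolding L2_def matrix_matrix_mult_def by (intro ext) (simp add: sum_2 algebra_simps)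
lemma L3_comp: "L3 M (L3 N T) = L3 (M ** N) T"
  unfolding L3_def matrix_matrix_mult_def by (intro ext) (simp add: sum_2 algebra_simps)
lemma L4_comp: "L4 M (L4 N T) = L4 (N ** M) T"
  unfolding L4_def matrix_matrix_mult_def by (intro ext) (simp add: sum_2 algebra_simps)

lemma L1_id: "L1 (mat 1) T = T"
  unfolding L1_def mat_def by (intro ext) (simp add: sum_2 forall_2, metis exhaust_2)
lemma L2_id: "L2 (mat 1) T = T"
  unfolding L2_def mat_def by (intro ext) (simp add: sum_2, metis exhaust_2)
lemma L3_id: "L3 (mat 1) T = T"
  unfolding L3_def mat_def by (intro ext) (simp add: sum_2, metis exhaust_2)
lemma L4_id: "L4 (mat 1) T = T"
  unfolding L4_def mat_def by (intro ext) (simp add: sum_2, metis exhaust_2)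

lemma L1_rk1: "rk1 T \<Longrightarrow> rk1 (L1 M T)"
  unfolding rk1_def L1_def
proof (elim exE)
  fix X Y assume h: "\<forall>b a d c. T b a d c = X b a * Y d c"
  show "\<exists>X Y. \<forall>b a d c. (\<Sum>x\<in>UNIV. M $ b $ x * T x a d c) = X b a * Y d c"
    by (rule exI[of _ "\<lambda>b a. \<Sum>x\<in>UNIV. M $ b $ x * X x a"], rule exI[of _ Y])
       (simp add: h sum_2 algebra_simps)
qed
lemma L2_rk1: "rk1 T \<Longrightarrow> rk1 (L2 M T)"
  unfolding rk1_def L2_def
proof (elim exE)
  fix X Y assume h: "\<forall>b a d c. T b a d c = X b a * Y d c"
  show "\<exists>X Y. \<forall>b a d c. (\<Sum>x\<in>UNIV. T b x d c * M $ x $ a) = X b a * Y d c"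
    by (rule exI[of _ "\<lambda>b a. \<Sum>x\<in>UNIV. X b x * M $ x $ a"], rule exI[of _ Y])
       (simp add: h sum_2 algebra_simps)
qed
lemma L3_rk1: "rk1 T \<Longrightarrow> rk1 (L3 M T)"
  unfolding rk1_def L3_def
proof (elim exE)
  fix X Y assume h: "\<forall>b a d c. T b a d c = X b a * Y d c"
  show "\<exists>X Y. \<forall>b a d c. (\<Sum>x\<in>UNIV. M $ d $ x * T b a x c) = X b a * Y d c"
    by (rule exI[of _ X], rule exI[of _ "\<lambda>d c. \<Sum>x\<in>UNIV. M $ d $ x * Y x c"])
       (simp add: h sum_2 algebra_simps)
qed
lemma L4_rk1: "rk1 T \<Longrightarrow> rk1 (L4 M T)"
  unfolding rk1_def L4_def
proof (elim exE)
  fix X Y assume h: "\<forall>b a d c. T b a d c = X b a * Y d c"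
  show "\<exists>X Y. \<forall>b a d c. (\<Sum>x\<in>UNIV. T b a d x * M $ x $ c) = X b a * Y d c"
    by (rule exI[of _ X], rule exI[of _ "\<lambda>d c. \<Sum>x\<in>UNIV. Y d x * M $ x $ c"])
       (simp add: h sum_2 algebra_simps)
qed

lemma one_ne_two: "(1::2) \<noteq> 2" by simp

lemma cas_not_rk1: "\<not> rk1 casimir_weight"
proof
  assume "rk1 casimir_weight"
  then obtain X Y where h: "\<And>b a d c. casimir_weight b a d c = X b a * Y d c"
    unfolding rk1_def by blast
  have 1: "X 1 1 * Y 1 1 = 1/2" using h[of 1 1 1 1]
    by (simp add: casimir_weight_def matH_def matE_def matF_def)
  have 2: "X 1 2 * Y 2 1 = 1" using h[of 1 2 2 1]
    by (simp add: casimir_weight_def matH_def matE_def matF_def)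
  have 3: "X 1 1 * Y 2 1 = 0" using h[of 1 1 2 1]
    by (simp add: casimir_weight_def matH_def matE_def matF_def)
  from 1 2 3 show False by (metis mult_eq_0_iff zero_neq_one divide_eq_0_iff zero_neq_numeral)
qed

lemma curv_anti: "curv g d a b c x = - curv g d b a c x"
  unfolding curv_def by (simp add: algebra_simps sum_subtractf)

lemma Rhat_rk1: "rk1 (\<lambda>b a d c. Rhat g b a d c p)"
  unfolding rk1_def
proof (rule exI[of _ "\<lambda>b a. if a = 1 then matrix_inv (g p) $ b $ 2 else - matrix_inv (g p) $ b $ 1"],
       rule exI[of _ "\<lambda>d c. curv g d 1 2 c p"], intro allI)
  fix b a d c :: 2
  have z: "curv g d e e c p = 0" for e using curv_anti[of g d e e c p] by simp
  have s: "curv g d 2 1 c p = - curv g d 1 2 c p" using curv_anti by blast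
  show "Rhat g b a d c p = (if a = 1 then matrix_inv (g p) $ b $ 2 else - matrix_inv (g p) $ b $ 1) * curv g d 1 2 c p"
    using exhaust_2[of a] by (auto simp: Rhat_def sum_2 z s)
qed

theorem mainTheorem7:
  shows "\<not> (\<exists>(U :: (real^2) set) g p (P :: real^2^2).
            locally_symmetric_chart U g \<and> p \<in> U \<and> invertible P \<and>
            (\<forall>b a d c. Rhat g b a d c p = transport P casimir_weight b a d c))"
proof
  assume "\<exists>(U :: (real^2) set) g p (P :: real^2^2).
            locally_symmetric_chart U g \<and> p \<in> U \<and> invertible P \<and>
            (\<forall>b a d c. Rhat g b a d c p = transport P casimir_weight b a d c)"
  then obtain g p and P :: "real^2^2" where inv: "invertible P"
    and eq: "\<forall>b a d c. Rhat g b a d c p = transport P casimir_weight b a d c" by blast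
  define Q where "Q = matrix_inv P"
  have QP: "Q ** P = mat 1"
    using inv unfolding Q_def invertible_def matrix_inv_def by (metis (mono_tags, lifting) someI_ex)
  have "transport P casimir_weight = (\<lambda>b a d c. Rhat g b a d c p)"
    using eq by (intro ext) simp
  hence r: "rk1 (transport P casimir_weight)" using Rhat_rk1 by simp
  have "L4 P (L3 Q (L2 P (L1 Q (transport P casimir_weight)))) = casimir_weight"
    unfolding transport_L Q_def[symmetric]
    by (simp add: L1_comp L2_comp L3_comp L4_comp QP L1_id L2_id L3_id L4_id)
  moreover have "rk1 (L4 P (L3 Q (L2 P (L1 Q (transport P casimir_weight)))))"
    by (intro L4_rk1 L3_rk1 L2_rk1 L1_rk1 r)
  ultimately show False using cas_not_rk1 by simp
qed

end
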